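(* Let $n$ be a nonzero integer and let $a<b<c$ be positive integers with $ac>n$, such that $ac+n=s^2$ and $bc+n=t^2$ for nonnegative integers $s,t$. Put $\theta_1=\sqrt{1+\frac{n}{ac}}$ and $\theta_2=\sqrt{1+\frac{n}{bc}}$. Then every solution in positive integers $x,y,z$ of the system \[ az^2-cx^2=n(a-c),\qquad bz^2-cy^2=n(b-c) \] satisfies \[ \max\Big(\Big|\theta_1-\frac{sbx}{abz}\Big|,\ \Big|\theta_2-\frac{tay}{abz}\Big|\Big)<\frac{c\,|n|}{a}\,z^{-2}. \] *)

theory Defs
  imports Complex_Main
begin

end

theory Submission
  imports Defs
begin

lemma fr_less:
  fixes A B C D :: real
  assumes "B > 0" "D > 0" "A * D < C * B" shows "A / B < C / D"
  using assms by (simp add: divide_simps)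

lemma fr_eq:
  fixes s a K B r z :: real
  assumes "a > 0" "B > 0" "r > 0" "z > 0"
  shows "s * (a * K / B) / (r * a * z) = s * K / (r * z * B)"
  using assms by (simp add: field_simps)

lemma key:
  fixes a c n s x z :: real
  assumes n0: "n \<noteq> 0" and a0: "0 < a" and ac: "a < c" and acn: "a * c > n"
    and s0: "s \<ge> 0" and sq: "a * c + n = s^2" and x0: "x > 0" and z0: "z > 0"
    and eq: "a * z^2 - c * x^2 = n * (a - c)"
  shows "\<bar>sqrt (1 + n / (a * c)) - s * x / (a * z)\<bar> < c * \<bar>n\<bar> / (a * z^2)"
proof -
  define r where "r = sqrt (a * c)"
  have c0: "c > 0" using a0 ac by linarith
  have acp: "a * c > 0" using a0 c0 by simp
  have r0: "r > 0" using acp r_def by simp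
  have r2: "r^2 = a * c" using acp r_def by simp
  have th: "sqrt (1 + n / (a * c)) = s / r"
  proof -
    have "1 + n / (a * c) = (s / r)^2" using r2 sq acp a0 c0 by (simp add: power_divide) (simp add: add_divide_distrib flip: sq)
    then show ?thesis using s0 r0 by simp
  qed
  have diff: "s / r - s * x / (a * z) = s * (a * z - x * r) / (r * a * z)"
    using r0 a0 z0 by (simp add: field_simps)
  have pos: "a * z + x * r > 0" using a0 z0 x0 r0 by (simp add: add_pos_pos)
  have prod: "(a * z - x * r) * (a * z + x * r) = a * n * (a - c)"
  proof -
    have "(a * z - x * r) * (a * z + x * r) = a^2 * z^2 - x^2 * r^2" by (simp add: algebra_simps power2_eq_square)
    also have "\<dots> = a * (a * z^2 - c * x^2)" using r2 by (simp add: algebra_simps power2_eq_square)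
    finally show ?thesis using eq by simp
  qed
  have absd: "\<bar>a * z - x * r\<bar> = a * \<bar>n\<bar> * (c - a) / (a * z + x * r)"
  proof -
    have "a * z - x * r = a * n * (a - c) / (a * z + x * r)" using prod pos by (simp add: field_simps)
    then have "\<bar>a * z - x * r\<bar> = \<bar>a * n * (a - c)\<bar> / (a * z + x * r)" using pos by simp
    also have "\<bar>a * n * (a - c)\<bar> = a * \<bar>n\<bar> * (c - a)" using a0 ac by (simp add: abs_mult)
    finally show ?thesis .
  qed
  have lhs: "\<bar>sqrt (1 + n / (a * c)) - s * x / (a * z)\<bar> = s * \<bar>n\<bar> * (c - a) / (r * z * (a * z + x * r))"
  proof -
    have "\<bar>s * (a * z - x * r) / (r * a * z)\<bar> = s * \<bar>a * z - x * r\<bar> / (r * a * z)"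
      using r0 a0 z0 s0 by (simp add: abs_mult)
    also have "\<dots> = s * (a * \<bar>n\<bar> * (c - a) / (a * z + x * r)) / (r * a * z)" using absd by simp
    also have "\<dots> = s * (\<bar>n\<bar> * (c - a)) / (r * z * (a * z + x * r))"
      using fr_eq[OF a0 pos r0 z0, of s "\<bar>n\<bar> * (c - a)"] by (simp add: mult.assoc)
    also have "\<dots> = s * \<bar>n\<bar> * (c - a) / (r * z * (a * z + x * r))" by (simp add: mult.assoc)
    finally show ?thesis unfolding th diff .
  qed
  have main: "s * (c - a) * a * z < c * r * (a * z + x * r)"
  proof (cases "n > 0")
    case True
    have nc: "n * (c - a) > 0" using True ac by (intro mult_pos_pos) auto
    have "n * (a - c) = - (n * (c - a))" by (simp add: algebra_simps)
    then have cx: "c * x^2 > a * z^2" using eq nc by linarith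
    have "(x * r)^2 = a * (c * x^2)" using r2 by (simp add: power_mult_distrib)
    also have "\<dots> > a * (a * z^2)" using cx a0 by (rule mult_strict_left_mono)
    also have "a * (a * z^2) = (a * z)^2" by (simp add: power2_eq_square)
    finally have "(a * z)^2 < (x * r)^2" .
    then have xr: "x * r > a * z" by (rule power_less_imp_less_base[of _ 2]) (use x0 r0 in auto)
    have "(2 * r)^2 = 4 * r^2" by (simp add: power2_eq_square)
    then have "s^2 < (2 * r)^2" using sq acn r2 acp by linarith
    then have s2: "s < 2 * r" by (rule power_less_imp_less_base[of _ 2]) (use s0 r0 in auto)
    have cr: "c * r > 0" using c0 r0 by (rule mult_pos_pos)
    have az: "a * z > 0" using a0 z0 by (rule mult_pos_pos)
    have h1: "s * ((c - a) * (a * z)) \<le> (2 * r) * ((c - a) * (a * z))"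
      by (rule mult_right_mono[OF less_imp_le[OF s2]]) (use ac az in simp)
    have h2: "2 * r * a * (a * z) > 0" using r0 a0 az by simp
    have h3: "c * r * (a * z) < c * r * (x * r)" using mult_strict_left_mono[OF xr cr] .
    have e1: "s * (c - a) * a * z = s * ((c - a) * (a * z))" by (simp add: algebra_simps)
    have e2: "(2 * r) * ((c - a) * (a * z)) = 2 * (c * r * (a * z)) - 2 * r * a * (a * z)" by (simp add: algebra_simps)
    have e3: "c * r * (a * z + x * r) = c * r * (a * z) + c * r * (x * r)" by (simp add: algebra_simps)
    show ?thesis unfolding e1 e3 using h1 h2 h3 e2 by linarith
  next
    case False
    then have "n < 0" using n0 by simp
    then have "s^2 < r^2" using sq r2 by linarith
    then have s2: "s < r" by (rule power_less_imp_less_base[of _ 2]) (use s0 r0 in auto)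
    have cr: "c * r > 0" using c0 r0 by (rule mult_pos_pos)
    have az: "a * z > 0" using a0 z0 by (rule mult_pos_pos)
    have h1: "s * ((c - a) * (a * z)) \<le> r * ((c - a) * (a * z))"
      by (rule mult_right_mono[OF less_imp_le[OF s2]]) (use ac az in simp)
    have h2: "r * a * (a * z) > 0" using r0 a0 az by simp
    have h3: "c * r * (x * r) > 0" using cr x0 r0 by simp
    have e1: "s * (c - a) * a * z = s * ((c - a) * (a * z))" by (simp add: algebra_simps)
    have e2: "r * ((c - a) * (a * z)) = c * r * (a * z) - r * a * (a * z)" by (simp add: algebra_simps)
    have e3: "c * r * (a * z + x * r) = c * r * (a * z) + c * r * (x * r)" by (simp add: algebra_simps)
    show ?thesis unfolding e1 e3 using h1 h2 h3 e2 by linarith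
  qed
  have nn: "\<bar>n\<bar> > 0" using n0 by simp
  have nz: "\<bar>n\<bar> * z > 0" using nn z0 by (rule mult_pos_pos)
  have "s * \<bar>n\<bar> * (c - a) / (r * z * (a * z + x * r)) < c * \<bar>n\<bar> / (a * z^2)"
  proof -
    have "s * \<bar>n\<bar> * (c - a) * (a * z^2) < c * \<bar>n\<bar> * (r * z * (a * z + x * r))"
    proof -
      have "s * \<bar>n\<bar> * (c - a) * (a * z^2) = (\<bar>n\<bar> * z) * (s * (c - a) * a * z)" by (simp add: power2_eq_square algebra_simps)
      also have "\<dots> < (\<bar>n\<bar> * z) * (c * r * (a * z + x * r))" using main nz by (rule mult_strict_left_mono)
      also have "\<dots> = c * \<bar>n\<bar> * (r * z * (a * z + x * r))" by (simp add: algebra_simps)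
      finally show ?thesis .
    qed
    moreover have "r * z * (a * z + x * r) > 0" using r0 z0 pos by simp
    moreover have "a * z^2 > 0" using a0 z0 by simp
    ultimately show ?thesis using fr_less by blast
  qed
  then show ?thesis using lhs by simp
qed

theorem lemma1:
  fixes n a b c s t x y z :: int
  assumes "n \<noteq> 0"
    and "0 < a" and "a < b" and "b < c"
    and "a * c > n"
    and "s \<ge> 0" and "t \<ge> 0"
    and "a * c + n = s^2" and "b * c + n = t^2"
    and "x > 0" and "y > 0" and "z > 0"
    and "a * z^2 - c * x^2 = n * (a - c)"
    and "b * z^2 - c * y^2 = n * (b - c)"
  shows "max \<bar>sqrt (1 + real_of_int n / real_of_int (a * c)) - real_of_int (s * b * x) / real_of_int (a * b * z)\<bar>
             \<bar>sqrt (1 + real_of_int n / real_of_int (b * c)) - real_of_int (t * a * y) / real_of_int (a * b * z)\<bar>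
         < real_of_int (c * \<bar>n\<bar>) / real_of_int a * real_of_int z powi (-2)"
proof -
  have "a * c < b * c" using assms(2-4) by (intro mult_strict_right_mono) auto
  then have bc: "b * c > n" using assms(5) by linarith
  have k1: "\<bar>sqrt (1 + real_of_int n / (real_of_int a * real_of_int c)) - real_of_int s * real_of_int x / (real_of_int a * real_of_int z)\<bar>
      < real_of_int c * \<bar>real_of_int n\<bar> / (real_of_int a * (real_of_int z)^2)"
    apply (rule key)
    using assms by (simp_all flip: of_int_mult of_int_power of_int_diff of_int_add add: of_int_less_iff)
  have k2: "\<bar>sqrt (1 + real_of_int n / (real_of_int b * real_of_int c)) - real_of_int t * real_of_int y / (real_of_int b * real_of_int z)\<bar>
      < real_of_int c * \<bar>real_of_int n\<bar> / (real_of_int b * (real_of_int z)^2)"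
    apply (rule key)
    using assms bc by (simp_all flip: of_int_mult of_int_power of_int_diff of_int_add add: of_int_less_iff)
  have le: "real_of_int c * \<bar>real_of_int n\<bar> / (real_of_int b * (real_of_int z)^2)
      \<le> real_of_int c * \<bar>real_of_int n\<bar> / (real_of_int a * (real_of_int z)^2)"
    using assms(2,3,4,12) by (intro divide_left_mono mult_right_mono) auto
  have e1: "real_of_int (s * b * x) / real_of_int (a * b * z) = real_of_int s * real_of_int x / (real_of_int a * real_of_int z)"
    using assms(2,3) by simp
  have e2: "real_of_int (t * a * y) / real_of_int (a * b * z) = real_of_int t * real_of_int y / (real_of_int b * real_of_int z)"
    using assms(2,3) by simp
  have e3: "real_of_int (c * \<bar>n\<bar>) / real_of_int a * real_of_int z powi (-2)
      = real_of_int c * \<bar>real_of_int n\<bar> / (real_of_int a * (real_of_int z)^2)"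
    by (simp add: power_int_minus field_simps)
  show ?thesis unfolding e1 e2 e3 using k1 k2 le by simp
qed

end
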